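(* For every integer $n\ge 5$, $\mathrm{mob}(K(n,2))=\max\left\{4,\left\lfloor \frac{n-3}{2}\right\rfloor\right\}$.
   Context: The Kneser graph $K(n,2)$ has as vertices all $2$-element subsets of $\{1,\dots,n\}$, two vertices being adjacent iff the subsets are disjoint. A set $S$ of vertices is a general position set if no three distinct vertices of $S$ lie on a common shortest path. Place one robot on each vertex of a general position set $S$; robots move one at a time, and a move is legal if a robot moves to an adjacent unoccupied vertex and the new set of occupied vertices is again a general position set. $S$ is a mobile general position set if some finite sequence of legal moves results in every vertex being occupied by some robot at some moment. $\mathrm{mob}$ of a graph is the maximum cardinality of a mobile general position set of it. *)

theory Defs
  imports Main
begin

text \<open>Generic (simple, undirected) graphs given by a vertex set V and an
adjacency relation E.\<close>

definition walk :: "'a set \<Rightarrow> ('a \<Rightarrow> 'a \<Rightarrow> bool) \<Rightarrow> 'a list \<Rightarrow> bool" where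
  "walk V E p \<longleftrightarrow> p \<noteq> [] \<and> set p \<subseteq> V \<and>
     (\<forall>i. Suc i < length p \<longrightarrow> E (p ! i) (p ! Suc i))"

definition gdist :: "'a set \<Rightarrow> ('a \<Rightarrow> 'a \<Rightarrow> bool) \<Rightarrow> 'a \<Rightarrow> 'a \<Rightarrow> nat" where
  "gdist V E u v = (LEAST k. \<exists>p. walk V E p \<and> hd p = u \<and> last p = v \<and> length p = Suc k)"

definition shortest_path :: "'a set \<Rightarrow> ('a \<Rightarrow> 'a \<Rightarrow> bool) \<Rightarrow> 'a list \<Rightarrow> bool" where
  "shortest_path V E p \<longleftrightarrow> walk V E p \<and> length p = Suc (gdist V E (hd p) (last p))"

definition gp_set :: "'a set \<Rightarrow> ('a \<Rightarrow> 'a \<Rightarrow> bool) \<Rightarrow> 'a set \<Rightarrow> bool" where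
  "gp_set V E S \<longleftrightarrow> S \<subseteq> V \<and>
     \<not> (\<exists>p u v w. shortest_path V E p \<and> u \<in> S \<and> v \<in> S \<and> w \<in> S \<and>
              u \<noteq> v \<and> v \<noteq> w \<and> u \<noteq> w \<and> u \<in> set p \<and> v \<in> set p \<and> w \<in> set p)"

definition legal_move :: "'a set \<Rightarrow> ('a \<Rightarrow> 'a \<Rightarrow> bool) \<Rightarrow> 'a set \<Rightarrow> 'a set \<Rightarrow> bool" where
  "legal_move V E S S' \<longleftrightarrow> (\<exists>u v. u \<in> S \<and> v \<in> V \<and> v \<notin> S \<and> E u v \<and>
       S' = insert v (S - {u}) \<and> gp_set V E S')"

definition mobile_gp_set :: "'a set \<Rightarrow> ('a \<Rightarrow> 'a \<Rightarrow> bool) \<Rightarrow> 'a set \<Rightarrow> bool" where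
  "mobile_gp_set V E S \<longleftrightarrow> gp_set V E S \<and>
     (\<exists>cs. cs \<noteq> [] \<and> hd cs = S \<and>
        (\<forall>i. Suc i < length cs \<longrightarrow> legal_move V E (cs ! i) (cs ! Suc i)) \<and>
        V \<subseteq> \<Union> (set cs))"

definition mob :: "'a set \<Rightarrow> ('a \<Rightarrow> 'a \<Rightarrow> bool) \<Rightarrow> nat" where
  "mob V E = Max {card S | S. mobile_gp_set V E S}"

definition kneser2_V :: "nat \<Rightarrow> nat set set" where
  "kneser2_V n = {A. A \<subseteq> {1..n} \<and> card A = 2}"

definition kneser2_E :: "nat set \<Rightarrow> nat set \<Rightarrow> bool" where
  "kneser2_E A B \<longleftrightarrow> A \<inter> B = {}"

end

theory Submission
  imports Defs
begin



lemma walk1: "walk V E [a] \<longleftrightarrow> a \<in> V"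
  by (simp add: walk_def)
lemma walk2: "walk V E [a,b] \<longleftrightarrow> a \<in> V \<and> b \<in> V \<and> E a b"
  by (auto simp add: walk_def less_Suc_eq)
lemma walk3: "walk V E [a,b,c] \<longleftrightarrow> a \<in> V \<and> b \<in> V \<and> c \<in> V \<and> E a b \<and> E b c"
  by (auto simp add: walk_def less_Suc_eq)

lemma gdist_le:
  assumes "walk V E p" "hd p = u" "last p = v"
  shows "gdist V E u v \<le> length p - 1"
proof -
  have "p \<noteq> []" using assms(1) by (simp add: walk_def)
  then have "length p = Suc (length p - 1)" by simp
  then show ?thesis unfolding gdist_def using assms by (intro Least_le) blast
qed

lemma gdist_ex:
  assumes "walk V E p" "hd p = u" "last p = v"
  obtains q where "walk V E q" "hd q = u" "last q = v" "length q = Suc (gdist V E u v)"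
proof -
  have "p \<noteq> []" using assms(1) by (simp add: walk_def)
  then have "length p = Suc (length p - 1)" by simp
  then have "\<exists>q. walk V E q \<and> hd q = u \<and> last q = v \<and> length q = Suc (length p - 1)"
    using assms by blast
  from LeastI[of "\<lambda>k. \<exists>q. walk V E q \<and> hd q = u \<and> last q = v \<and> length q = Suc k", OF this]
  show ?thesis using that unfolding gdist_def by blast
qed

lemma KV_mem: "a \<in> kneser2_V n \<longleftrightarrow> a \<subseteq> {1..n} \<and> card a = 2"
  by (simp add: kneser2_V_def)

lemma KV_finite: "finite (kneser2_V n)"
  by (rule finite_subset[of _ "Pow {1..n}"]) (auto simp: kneser2_V_def)

lemma KV_fin_el: "a \<in> kneser2_V n \<Longrightarrow> finite a"
  by (auto simp: kneser2_V_def intro: finite_subset)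

lemma common_nb:
  assumes "5 \<le> n" "a \<in> kneser2_V n" "b \<in> kneser2_V n" "a \<inter> b \<noteq> {}"
  obtains w where "w \<in> kneser2_V n" "w \<inter> a = {}" "w \<inter> b = {}"
proof -
  have fa: "finite a" "finite b" using assms KV_fin_el by auto
  have ca: "card a = 2" "card b = 2" using assms by (auto simp: KV_mem)
  have "card (a \<union> b) + card (a \<inter> b) = card a + card b" using card_Un_Int[OF fa] by simp
  moreover have "card (a \<inter> b) \<ge> 1" using assms(4) fa by (simp add: Suc_le_eq card_gt_0_iff)
  ultimately have cu: "card (a \<union> b) \<le> 3" using ca by simp
  have sub: "a \<union> b \<subseteq> {1..n}" using assms by (auto simp: KV_mem)
  have "card ({1..n} - (a \<union> b)) = n - card (a \<union> b)"
    using card_Diff_subset[OF finite_subset[OF sub] sub] by simp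
  then have "2 \<le> card ({1..n} - (a \<union> b))" using cu assms(1) by simp
  then obtain w where w: "w \<subseteq> {1..n} - (a \<union> b)" "card w = 2"
    by (meson obtain_subset_with_card_n)
  then show ?thesis using that[of w] by (auto simp: KV_mem)
qed

lemma gdist_le2:
  assumes "5 \<le> n" "a \<in> kneser2_V n" "b \<in> kneser2_V n"
  shows "gdist (kneser2_V n) kneser2_E a b \<le> 2"
proof (cases "a \<inter> b = {}")
  case True
  then have "walk (kneser2_V n) kneser2_E [a,b]" using assms by (simp add: walk2 kneser2_E_def)
  from gdist_le[OF this refl refl] show ?thesis by simp
next
  case False
  then obtain w where "w \<in> kneser2_V n" "w \<inter> a = {}" "w \<inter> b = {}" using common_nb assms by blast
  then have "walk (kneser2_V n) kneser2_E [a,w,b]" using assms by (auto simp add: walk3 kneser2_E_def)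
  from gdist_le[OF this refl refl] show ?thesis by simp
qed

lemma gdist_ge2:
  assumes "a \<noteq> b" "a \<inter> b \<noteq> {}" "walk V kneser2_E p" "hd p = a" "last p = b"
  shows "2 \<le> gdist V kneser2_E a b"
proof -
  obtain q where q: "walk V kneser2_E q" "hd q = a" "last q = b" "length q = Suc (gdist V kneser2_E a b)"
    using gdist_ex assms by metis
  show ?thesis
  proof (rule ccontr)
    assume "\<not> ?thesis"
    then have "length q = 1 \<or> length q = 2" using q(4) by linarith
    then show False
    proof
      assume "length q = 1"
      then obtain x where "q = [x]" by (metis One_nat_def length_0_conv length_Suc_conv)
      then show False using q assms by simp
    next
      assume "length q = 2"
      then obtain x y where "q = [x,y]" by (metis One_nat_def length_0_conv length_Suc_conv numeral_2_eq_2)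
      then show False using q assms by (simp add: walk2 kneser2_E_def)
    qed
  qed
qed

definition nopat :: "nat set set \<Rightarrow> bool" where
  "nopat S \<longleftrightarrow> (\<forall>a\<in>S. \<forall>b\<in>S. \<forall>w\<in>S. a \<noteq> b \<longrightarrow> w \<inter> a = {} \<longrightarrow> w \<inter> b = {} \<longrightarrow> a \<inter> b = {})"

lemma gp_imp_nopat:
  assumes "5 \<le> n" "gp_set (kneser2_V n) kneser2_E S"
  shows "nopat S"
  unfolding nopat_def
proof (intro ballI impI, rule ccontr)
  fix a b w assume ab: "a \<in> S" "b \<in> S" "w \<in> S" "a \<noteq> b" "w \<inter> a = {}" "w \<inter> b = {}" "a \<inter> b \<noteq> {}"
  have SV: "S \<subseteq> kneser2_V n" using assms by (simp add: gp_set_def)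
  have "a \<noteq> {}" using ab by blast
  then have wa: "w \<noteq> a" "w \<noteq> b" using ab by auto
  have wk: "walk (kneser2_V n) kneser2_E [a,w,b]" using ab SV by (auto simp: walk3 kneser2_E_def)
  have "gdist (kneser2_V n) kneser2_E a b = 2"
    using gdist_le[OF wk refl refl] gdist_ge2[OF ab(4) ab(7) wk] by simp
  then have "shortest_path (kneser2_V n) kneser2_E [a,w,b]" using wk by (simp add: shortest_path_def)
  then show False using assms(2) ab wa unfolding gp_set_def by (metis list.set_intros(1,2))
qed

lemma nopat_imp_gp:
  assumes "5 \<le> n" "S \<subseteq> kneser2_V n" "nopat S"
  shows "gp_set (kneser2_V n) kneser2_E S"
  unfolding gp_set_def
proof (intro conjI assms(2) notI, elim exE conjE)
  fix p u v w
  assume sp: "shortest_path (kneser2_V n) kneser2_E p" and in3: "u \<in> S" "v \<in> S" "w \<in> S" "u \<noteq> v" "v \<noteq> w" "u \<noteq> w"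
     "u \<in> set p" "v \<in> set p" "w \<in> set p"
  have wk: "walk (kneser2_V n) kneser2_E p" and lp: "length p = Suc (gdist (kneser2_V n) kneser2_E (hd p) (last p))"
    using sp by (auto simp: shortest_path_def)
  have ne: "p \<noteq> []" using wk by (simp add: walk_def)
  have pV: "set p \<subseteq> kneser2_V n" using wk by (simp add: walk_def)
  have "gdist (kneser2_V n) kneser2_E (hd p) (last p) \<le> 2"
    using gdist_le2[OF assms(1)] pV ne by (meson hd_in_set last_in_set subsetD)
  then have l3: "length p \<le> 3" using lp by simp
  have c3: "3 = card {u,v,w}" using in3 by simp
  have sub3: "{u,v,w} \<subseteq> set p" using in3 by auto
  have "card {u,v,w} \<le> card (set p)" using sub3 by (intro card_mono) auto
  also have "\<dots> \<le> length p" by (rule card_length)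
  finally have lp3: "length p = 3" using l3 c3 by simp
  have cs: "card (set p) = 3" using c3 \<open>card {u,v,w} \<le> card (set p)\<close> card_length[of p] lp3 by simp
  have dp: "distinct p" using cs lp3 by (simp add: card_distinct)
  have eqs: "{u,v,w} = set p" using sub3 cs c3 by (intro card_subset_eq) auto
  obtain x y z where p: "p = [x,y,z]" using lp3
    by (auto simp: numeral_3_eq_3 length_Suc_conv)
  have d: "x \<noteq> y" "y \<noteq> z" "x \<noteq> z" using dp p by auto
  have S3: "x \<in> S" "y \<in> S" "z \<in> S" using in3 eqs p by auto
  have e: "kneser2_E x y" "kneser2_E y z" using wk p by (auto simp: walk3)
  have g2: "gdist (kneser2_V n) kneser2_E x z = 2" using lp p by simp
  have "x \<inter> z \<noteq> {}"
  proof
    assume "x \<inter> z = {}"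
    then have "walk (kneser2_V n) kneser2_E [x,z]" using pV p by (simp add: walk2 kneser2_E_def)
    from gdist_le[OF this refl refl] g2 show False by simp
  qed
  then show False using assms(3) S3 d e unfolding nopat_def kneser2_E_def by (metis Int_commute)
qed





definition pw :: "nat set set \<Rightarrow> bool" where
  "pw S \<longleftrightarrow> (\<forall>a\<in>S. \<forall>b\<in>S. a \<noteq> b \<longrightarrow> a \<inter> b = {})"

definition two :: "nat set set \<Rightarrow> bool" where
  "two S \<longleftrightarrow> (\<forall>a\<in>S. card a = 2)"

lemma card2_mem: assumes "card a = 2" "y \<in> a" obtains z where "z \<noteq> y" "a = {y,z}"
proof -
  obtain p q where "p \<noteq> q" "a = {p,q}" using assms(1) by (meson card_2_iff)
  show ?thesis
  proof (cases "y = p")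
    case True then show ?thesis using that[of q] \<open>p \<noteq> q\<close> \<open>a = {p,q}\<close> by simp
  next
    case False then have "y = q" using assms(2) \<open>a = {p,q}\<close> by blast
    then show ?thesis using that[of p] \<open>p \<noteq> q\<close> \<open>a = {p,q}\<close> by (simp add: insert_commute)
  qed
qed

lemma card2E: assumes "card a = 2" obtains x y where "x \<noteq> y" "a = {x,y}"
  using assms by (meson card_2_iff)

lemma meet3:
  assumes "card e = 2" "e \<inter> c \<noteq> {}" "e \<inter> d \<noteq> {}" "e \<inter> f \<noteq> {}"
    "c \<inter> d = {}" "c \<inter> f = {}" "d \<inter> f = {}"
  shows False
proof -
  obtain x y where e: "e = {x,y}" using assms(1) by (rule card2E)
  have "x \<in> c \<or> y \<in> c" "x \<in> d \<or> y \<in> d" "x \<in> f \<or> y \<in> f" using assms(2-4) e by auto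
  then show False using assms(5-7) by blast
qed

lemma nopat_pw: "pw S \<Longrightarrow> nopat S"
  by (auto simp: pw_def nopat_def)

lemma nopat_star: "\<forall>a\<in>S. x \<in> a \<Longrightarrow> nopat S"
  by (auto simp: nopat_def)

lemma nopat_in4:
  assumes "two S" "\<forall>a\<in>S. a \<subseteq> T" "card T = 4"
  shows "nopat S"
  unfolding nopat_def
proof (intro ballI impI)
  fix a b w assume h: "a \<in> S" "b \<in> S" "w \<in> S" "a \<noteq> b" "w \<inter> a = {}" "w \<inter> b = {}"
  have fT: "finite T" using assms(3) by (metis card.infinite zero_neq_numeral)
  have cw: "card (T - w) = 2" using assms h by (simp add: two_def card_Diff_subset finite_subset[OF _ fT])
  have "a = T - w" using h assms cw fT by (intro card_subset_eq) (auto simp: two_def)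
  moreover have "b = T - w" using h assms cw fT by (intro card_subset_eq) (auto simp: two_def)
  ultimately show "a \<inter> b = {}" using h by simp
qed

lemma nopat_G:
  assumes "nopat S" "c \<in> S" "d \<in> S" "f \<in> S" "c \<inter> d = {}" "c \<noteq> d" "f \<noteq> c" "f \<inter> c \<noteq> {}"
  shows "f \<inter> d \<noteq> {}"
proof
  assume fd: "f \<inter> d = {}"
  show False
  proof (cases "f = d")
    case True then show False using assms by auto
  next
    case False
    then show False using assms fd unfolding nopat_def by (metis Int_commute)
  qed
qed

lemma classify:
  assumes "two S" "nopat S" "finite S" "4 \<le> card S"
  shows "pw S \<or> (\<exists>x. \<forall>a\<in>S. x \<in> a) \<or> (\<exists>T. card T = 4 \<and> (\<forall>a\<in>S. a \<subseteq> T))"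
proof (cases "pw S")
  case True then show ?thesis by simp
next
  case npw: False
  then obtain a b where ab: "a \<in> S" "b \<in> S" "a \<noteq> b" "a \<inter> b \<noteq> {}" by (auto simp: pw_def)
  show ?thesis
  proof (cases "\<exists>c\<in>S. \<exists>d\<in>S. c \<noteq> d \<and> c \<inter> d = {}")
    case True
    then obtain c d where cd: "c \<in> S" "d \<in> S" "c \<noteq> d" "c \<inter> d = {}" by blast
    have "\<exists>e\<in>S. e \<noteq> c \<and> e \<inter> c \<noteq> {}"
    proof (rule ccontr)
      assume "\<not> ?thesis"
      then have "(a = c \<or> a \<inter> c = {}) \<and> (b = c \<or> b \<inter> c = {})" using ab by blast
      then show False using ab cd assms(2) unfolding nopat_def by (metis Int_commute)
    qed
    then obtain e where e: "e \<in> S" "e \<noteq> c" "e \<inter> c \<noteq> {}" by blast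
    have ed: "e \<inter> d \<noteq> {}" using nopat_G[OF assms(2) cd(1,2) e(1) cd(4,3) e(2,3)] .
    have c2: "card c = 2" "card d = 2" using cd assms(1) by (auto simp: two_def)
    then have "finite c" "finite d" by (auto intro: card_ge_0_finite)
    then have cdT: "card (c \<union> d) = 4" using card_Un_disjoint[of c d] c2 cd(4) by simp
    have "\<forall>f\<in>S. f \<subseteq> c \<union> d"
    proof
      fix f assume f: "f \<in> S"
      show "f \<subseteq> c \<union> d"
      proof (cases "f = c \<or> f = d")
        case True then show ?thesis by auto
      next
        case False
        show ?thesis
        proof (cases "f \<inter> c = {}")
          case fc: True
          show ?thesis
          proof (cases "f \<inter> d = {}")
            case True
            have "card e = 2" using e assms(1) by (simp add: two_def)
            have ef: "e \<inter> f \<noteq> {}"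
              using nopat_G[OF assms(2) cd(1) f e(1)] fc False e by (auto simp: Int_commute)
            have "False" using meet3[OF \<open>card e = 2\<close> e(3) ed ef cd(4)] fc True by (simp add: Int_commute)
            then show ?thesis ..
          next
            case False2: False
            have "f \<inter> c \<noteq> {}"
              using nopat_G[OF assms(2) cd(2,1) f] cd False False2 by (auto simp: Int_commute)
            then show ?thesis using fc by simp
          qed
        next
          case fc: False
          have fd: "f \<inter> d \<noteq> {}" using nopat_G[OF assms(2) cd(1,2) f cd(4,3)] False fc by auto
          have "card f = 2" using f assms(1) by (simp add: two_def)
          then obtain x y where "x \<noteq> y" "f = {x,y}" by (rule card2E)
          then show ?thesis using fc fd cd(4) by blast
        qed
      qed
    qed
    then show ?thesis using cdT by blast
  next
    case False
    then have inter: "\<forall>c\<in>S. \<forall>d\<in>S. c \<noteq> d \<longrightarrow> c \<inter> d \<noteq> {}" by blast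
    obtain x y where xy: "x \<noteq> y" "a = {x,y}" using assms(1) ab by (meson card2E two_def)
    show ?thesis
    proof (rule ccontr)
      assume nt: "\<not> ?thesis"
      then obtain b' where b': "b' \<in> S" "x \<notin> b'" by blast
      obtain c' where c': "c' \<in> S" "y \<notin> c'" using nt by blast
      have "b' \<noteq> a" "c' \<noteq> a" using b' c' xy by auto
      then have yb: "y \<in> b'" and xc: "x \<in> c'" using inter ab b' c' xy by auto
      obtain z where bz: "z \<noteq> y" "b' = {y,z}" using assms(1) b' yb card2_mem unfolding two_def by metis
      obtain t where ct: "t \<noteq> x" "c' = {x,t}" using assms(1) c' xc card2_mem unfolding two_def by metis
      have "b' \<noteq> c'" using b' xc by auto
      then have "b' \<inter> c' \<noteq> {}" using inter b' c' by auto
      then have zt: "z = t" using bz ct b' c' xy by auto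
      have "S \<subseteq> {a, b', c'}"
      proof
        fix f assume f: "f \<in> S"
        show "f \<in> {a,b',c'}"
        proof (rule ccontr)
          assume nf: "f \<notin> {a,b',c'}"
          then have m: "f \<inter> a \<noteq> {}" "f \<inter> b' \<noteq> {}" "f \<inter> c' \<noteq> {}" using inter f ab b' c' by auto
          obtain p q where pq: "p \<noteq> q" "f = {p,q}" using assms(1) f by (meson card2E two_def)
          show False using m pq nf xy bz ct zt b' c' by auto
        qed
      qed
      moreover have "card {a,b',c'} \<le> 3" by (auto simp: card_insert_if)
      ultimately have "card S \<le> 3" by (meson card_mono finite.emptyI finite.insertI le_trans)
      then show False using assms(4) by simp
    qed
  qed
qed




lemma inv_not_mobile:
  assumes "P S" "\<And>X Y. P X \<Longrightarrow> legal_move V E X Y \<Longrightarrow> P Y" "\<And>X. P X \<Longrightarrow> X \<subseteq> W"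
    "x \<in> V" "x \<notin> W"
  shows "\<not> mobile_gp_set V E S"
proof
  assume "mobile_gp_set V E S"
  then obtain cs where cs: "cs \<noteq> []" "hd cs = S"
    "\<forall>i. Suc i < length cs \<longrightarrow> legal_move V E (cs ! i) (cs ! Suc i)" "V \<subseteq> \<Union> (set cs)"
    unfolding mobile_gp_set_def by blast
  have "\<forall>i. i < length cs \<longrightarrow> P (cs ! i)"
  proof
    fix i show "i < length cs \<longrightarrow> P (cs ! i)"
    proof (induction i)
      case 0 then show ?case using cs assms(1) by (simp add: hd_conv_nth)
    next
      case (Suc i) then show ?case using cs(3) assms(2) by auto
    qed
  qed
  moreover obtain X where "X \<in> set cs" "x \<in> X" using cs(4) assms(4) by blast
  ultimately show False using assms(3,5) by (metis in_set_conv_nth subsetD)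
qed

lemma legal_card:
  assumes "legal_move V E X Y" "finite X" shows "card Y = card X"
proof -
  obtain u v where h: "u \<in> X" "v \<notin> X" "Y = insert v (X - {u})" using assms unfolding legal_move_def by blast
  then have "card Y = Suc (card (X - {u}))" using assms(2) by simp
  then show ?thesis using h assms(2) card_Suc_Diff1 by metis
qed

lemma legal_K:
  assumes "5 \<le> n" "legal_move (kneser2_V n) kneser2_E S S'"
  obtains u v where "u \<in> S" "v \<in> kneser2_V n" "v \<notin> S" "u \<inter> v = {}" "S' = insert v (S - {u})"
    "nopat S'" "S' \<subseteq> kneser2_V n"
  using assms gp_imp_nopat[OF assms(1)] unfolding legal_move_def kneser2_E_def
  by (metis gp_set_def)

lemma two_V: "S \<subseteq> kneser2_V n \<Longrightarrow> two S"
  by (auto simp: two_def kneser2_V_def)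

lemma fin_V: "S \<subseteq> kneser2_V n \<Longrightarrow> finite S"
  using KV_finite finite_subset by blast

lemma two_elems: assumes "2 \<le> card R" obtains a b where "a \<in> R" "b \<in> R" "a \<noteq> b"
proof -
  obtain T where "T \<subseteq> R" "card T = 2" using assms by (meson obtain_subset_with_card_n)
  then show ?thesis using that by (metis card_2_iff insert_subset)
qed

lemma three_elems: assumes "3 \<le> card R" obtains a b c where "a \<in> R" "b \<in> R" "c \<in> R" "a \<noteq> b" "a \<noteq> c" "b \<noteq> c"
proof -
  obtain T where "T \<subseteq> R" "card T = 3" using assms by (meson obtain_subset_with_card_n)
  then show ?thesis using that by (metis card_3_iff insert_subset)
qed

lemma starT:
  assumes "two R" "\<forall>a\<in>R. x \<in> a" "\<forall>a\<in>R. a \<subseteq> T" "finite T"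
  shows "card R \<le> card (T - {x})"
proof -
  have "R \<subseteq> (\<lambda>t. {x,t}) ` (T - {x})"
  proof
    fix a assume a: "a \<in> R"
    then obtain z where "z \<noteq> x" "a = {x,z}" using assms(1,2) card2_mem unfolding two_def by metis
    then show "a \<in> (\<lambda>t. {x,t}) ` (T - {x})" using a assms(3) by auto
  qed
  then have "card R \<le> card ((\<lambda>t. {x,t}) ` (T - {x}))" using assms(4) by (intro card_mono) auto
  also have "\<dots> \<le> card (T - {x})" by (rule card_image_le) (use assms(4) in auto)
  finally show ?thesis .
qed

lemma sub3:
  assumes "two R" "\<forall>a\<in>R. a \<subseteq> U" "card U = 3"
  shows "card R \<le> 3"
proof -
  have fU: "finite U" using assms(3) by (metis card.infinite zero_neq_numeral)
  have "R \<subseteq> (\<lambda>s. U - {s}) ` U"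
  proof
    fix a assume a: "a \<in> R"
    then have ca: "card a = 2" "a \<subseteq> U" using assms by (auto simp: two_def)
    then have "card (U - a) = 1" using fU assms(3) by (simp add: card_Diff_subset finite_subset)
    then obtain s where s: "U - a = {s}" by (meson card_1_singletonE)
    then have "a = U - {s}" using ca by auto
    then show "a \<in> (\<lambda>s. U - {s}) ` U" using s by auto
  qed
  then have "card R \<le> card ((\<lambda>s. U - {s}) ` U)" using fU by (intro card_mono) auto
  also have "\<dots> \<le> card U" by (rule card_image_le) (use fU in auto)
  finally show ?thesis using assms(3) by simp
qed

lemma cover4:
  assumes "two R" "\<forall>a\<in>R. a \<subseteq> T" "card T = 4" "4 \<le> card R"
  shows "T \<subseteq> \<Union> R"
proof
  fix t assume t: "t \<in> T"
  show "t \<in> \<Union> R"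
  proof (rule ccontr)
    assume "t \<notin> \<Union> R"
    then have "\<forall>a\<in>R. a \<subseteq> T - {t}" using assms(2) by auto
    moreover have "card (T - {t}) = 3" using assms(3) t by simp
    ultimately have "card R \<le> 3" using sub3 assms(1) by blast
    then show False using assms(4) by simp
  qed
qed

lemma pw3T:
  assumes "two R" "pw R" "3 \<le> card R" "\<forall>a\<in>R. a \<subseteq> T" "card T = 4"
  shows False
proof -
  obtain a b c where abc: "a \<in> R" "b \<in> R" "c \<in> R" "a \<noteq> b" "a \<noteq> c" "b \<noteq> c"
    using assms(3) by (rule three_elems)
  have c2: "card a = 2" "card b = 2" "card c = 2" using abc assms(1) by (auto simp: two_def)
  then have fin: "finite a" "finite b" "finite c" by (auto intro: card_ge_0_finite)
  have d: "a \<inter> b = {}" "a \<inter> c = {}" "b \<inter> c = {}" using abc assms(2) by (auto simp: pw_def)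
  have "card (a \<union> b) = 4" using card_Un_disjoint[OF fin(1,2) d(1)] c2 by simp
  moreover have "a \<union> b \<subseteq> T" using abc assms(4) by auto
  ultimately have "a \<union> b = T" using assms(5)
    by (metis card.infinite card_subset_eq zero_neq_numeral)
  then have "c = {}" using abc assms(4) d by blast
  then show False using c2 by simp
qed

lemma pw_mono: "pw S \<Longrightarrow> R \<subseteq> S \<Longrightarrow> pw R"
  unfolding pw_def by blast

lemma pw_D: "pw S \<Longrightarrow> a \<in> S \<Longrightarrow> b \<in> S \<Longrightarrow> a \<noteq> b \<Longrightarrow> a \<inter> b = {}"
  unfolding pw_def by blast

lemma star_stuck:
  assumes n5: "5 \<le> n" and SV: "S \<subseteq> kneser2_V n" and st: "\<forall>a\<in>S. x \<in> a" and c5: "5 \<le> card S"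
    and lm: "legal_move (kneser2_V n) kneser2_E S S'"
  shows False
proof -
  obtain u v where uv: "u \<in> S" "v \<in> kneser2_V n" "v \<notin> S" "u \<inter> v = {}" "S' = insert v (S - {u})"
    "nopat S'" "S' \<subseteq> kneser2_V n" using legal_K[OF n5 lm] by metis
  have fS: "finite S" using SV by (rule fin_V)
  have cS': "card S' = card S" using legal_card[OF lm fS] .
  define R where "R = S - {u}"
  have cR: "4 \<le> card R" using c5 uv(1) fS by (simp add: R_def)
  have RS: "R \<subseteq> S'" "R \<subseteq> S" using uv by (auto simp: R_def)
  have twoR: "two R" using RS SV two_V by blast
  have c2R: "2 \<le> card R" using cR by simp
  obtain a b where ab: "a \<in> R" "b \<in> R" "a \<noteq> b" by (rule two_elems[OF c2R])
  have cl: "pw S' \<or> (\<exists>y. \<forall>a\<in>S'. y \<in> a) \<or> (\<exists>T. card T = 4 \<and> (\<forall>a\<in>S'. a \<subseteq> T))"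
    by (rule classify[OF two_V[OF uv(7)] uv(6) fin_V[OF uv(7)]]) (use cS' c5 in linarith)
  then consider (p) "pw S'" | (s) y where "\<forall>a\<in>S'. y \<in> a" | (t) T where "card T = 4" "\<forall>a\<in>S'. a \<subseteq> T"
    by blast
  then show False
  proof cases
    case p
    have "a \<in> S'" "b \<in> S'" using ab RS by auto
    then have "a \<inter> b = {}" using p ab(3) unfolding pw_def by blast
    moreover have "x \<in> a" "x \<in> b" using st ab RS by auto
    ultimately show False by blast
  next
    case (s y)
    note y = s
    show False
    proof (cases "y = x")
      case True
      have "v \<in> S'" using uv(5) by simp
      then have "x \<in> v" "x \<in> u" using y True st uv(1) by auto
      then show False using uv(4) by blast
    next
      case False
      have "{x,y} \<subseteq> a" "{x,y} \<subseteq> b" using y st ab RS by auto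
      moreover have "card {x,y} = 2" using False by simp
      moreover have "card a = 2" "card b = 2" using twoR ab by (auto simp: two_def)
      ultimately have "a = {x,y}" "b = {x,y}"
        by (metis card.infinite card_subset_eq zero_neq_numeral)+
      then show False using ab by simp
    qed
  next
    case (t T)
    note T = t
    have fT: "finite T" using T(1) by (metis card.infinite zero_neq_numeral)
    have "x \<in> T" using ab RS T st by blast
    then have "card (T - {x}) = 3" using T fT by simp
    moreover have "card R \<le> card (T - {x})" using starT[OF twoR _ _ fT] st RS T by blast
    ultimately show False using cR by simp
  qed
qed

lemma in4_inv:
  assumes n5: "5 \<le> n" and SV: "S \<subseteq> kneser2_V n" and st: "\<forall>a\<in>S. a \<subseteq> T" and T4: "card T = 4"
    and c5: "5 \<le> card S" and lm: "legal_move (kneser2_V n) kneser2_E S S'"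
  shows "\<forall>a\<in>S'. a \<subseteq> T"
proof -
  obtain u v where uv: "u \<in> S" "v \<in> kneser2_V n" "v \<notin> S" "u \<inter> v = {}" "S' = insert v (S - {u})"
    "nopat S'" "S' \<subseteq> kneser2_V n" using legal_K[OF n5 lm] by metis
  have fS: "finite S" using SV by (rule fin_V)
  have cS': "card S' = card S" using legal_card[OF lm fS] .
  define R where "R = S - {u}"
  have cR: "4 \<le> card R" using c5 uv(1) fS by (simp add: R_def)
  have RS: "R \<subseteq> S'" "R \<subseteq> S" using uv by (auto simp: R_def)
  have twoR: "two R" using RS SV two_V by blast
  have RT: "\<forall>a\<in>R. a \<subseteq> T" using RS st by auto
  have fT: "finite T" using T4 by (metis card.infinite zero_neq_numeral)
  have c2R: "2 \<le> card R" using cR by simp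
  obtain a b where ab: "a \<in> R" "b \<in> R" "a \<noteq> b" by (rule two_elems[OF c2R])
  have cl: "pw S' \<or> (\<exists>y. \<forall>a\<in>S'. y \<in> a) \<or> (\<exists>T. card T = 4 \<and> (\<forall>a\<in>S'. a \<subseteq> T))"
    by (rule classify[OF two_V[OF uv(7)] uv(6) fin_V[OF uv(7)]]) (use cS' c5 in linarith)
  then consider (p) "pw S'" | (s) y where "\<forall>a\<in>S'. y \<in> a" | (t) T' where "card T' = 4" "\<forall>a\<in>S'. a \<subseteq> T'"
    by blast
  then show ?thesis
  proof cases
    case p
    then have "pw R" using RS(1) by (rule pw_mono)
    have c3R: "3 \<le> card R" using cR by linarith
    have "False" using pw3T[OF twoR \<open>pw R\<close> c3R RT T4] .
    then show ?thesis by blast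
  next
    case (s y)
    note y = s
    have "a \<in> S'" using ab RS by blast
    then have "y \<in> a" using y by blast
    then have "y \<in> T" using RT ab by blast
    then have c3: "card (T - {y}) = 3" using T4 fT by simp
    have "\<forall>a\<in>R. y \<in> a" using y RS by blast
    then have "card R \<le> card (T - {y})" by (rule starT[OF twoR _ RT fT])
    then have False using cR c3 by linarith
    then show ?thesis by blast
  next
    case (t T')
    note T' = t
    have "T \<subseteq> \<Union> R" using cover4[OF twoR RT T4 cR] .
    also have "\<dots> \<subseteq> T'" using T' RS by auto
    finally have sub: "T \<subseteq> T'" .
    have "finite T'" using T'(1) by (metis card.infinite zero_neq_numeral)
    then have "T = T'" using card_subset_eq[OF _ sub] T4 T'(1) by simp
    then show ?thesis using T' by simp
  qed
qed

lemma pw_move: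
  assumes n5: "5 \<le> n" and SV: "S \<subseteq> kneser2_V n" and p: "pw S"
    and c5: "5 \<le> card S" and lm: "legal_move (kneser2_V n) kneser2_E S S'"
  obtains u v where "u \<in> S" "S' = insert v (S - {u})" "v \<in> kneser2_V n" "v \<inter> \<Union> S = {}" "pw S'"
    "S' \<subseteq> kneser2_V n"
proof -
  obtain u v where uv: "u \<in> S" "v \<in> kneser2_V n" "v \<notin> S" "u \<inter> v = {}" "S' = insert v (S - {u})"
    "nopat S'" "S' \<subseteq> kneser2_V n" using legal_K[OF n5 lm] by metis
  have fS: "finite S" using SV by (rule fin_V)
  have cS': "card S' = card S" using legal_card[OF lm fS] .
  define R where "R = S - {u}"
  have cR: "4 \<le> card R" using c5 uv(1) fS by (simp add: R_def)
  have RS: "R \<subseteq> S'" "R \<subseteq> S" using uv by (auto simp: R_def)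
  have twoR: "two R" using RS SV two_V by blast
  have pR: "pw R" using p RS(2) by (rule pw_mono)
  have c2R: "2 \<le> card R" using cR by simp
  obtain a b where ab: "a \<in> R" "b \<in> R" "a \<noteq> b" by (rule two_elems[OF c2R])
  have cl: "pw S' \<or> (\<exists>y. \<forall>a\<in>S'. y \<in> a) \<or> (\<exists>T. card T = 4 \<and> (\<forall>a\<in>S'. a \<subseteq> T))"
    by (rule classify[OF two_V[OF uv(7)] uv(6) fin_V[OF uv(7)]]) (use cS' c5 in linarith)
  from cl consider (p) "pw S'" | (s) y where "\<forall>a\<in>S'. y \<in> a" | (t) T' where "card T' = 4" "\<forall>a\<in>S'. a \<subseteq> T'"
    by blast
  then have "pw S'"
  proof cases
    case p then show ?thesis .
  next
    case (s y)
    have "a \<inter> b = {}" using pw_D[OF pR ab] .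
    moreover have "y \<in> a" "y \<in> b" using s ab RS by auto
    ultimately show ?thesis by blast
  next
    case (t T')
    have "\<forall>a\<in>R. a \<subseteq> T'" using t RS by blast
    have c3R: "3 \<le> card R" using cR by linarith
    have "False" using pw3T[OF twoR pR c3R \<open>\<forall>a\<in>R. a \<subseteq> T'\<close> t(1)] .
    then show ?thesis by blast
  qed
  moreover have "v \<inter> \<Union> S = {}"
  proof -
    have "\<forall>a\<in>S. a \<inter> v = {}"
    proof
      fix a assume a: "a \<in> S"
      show "a \<inter> v = {}"
      proof (cases "a = u")
        case True then show ?thesis using uv by simp
      next
        case False
        then have "a \<in> S'" "a \<noteq> v" using a uv by auto
        moreover have "v \<in> S'" using uv(5) by simp
        ultimately show ?thesis using pw_D[OF \<open>pw S'\<close>] by blast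
      qed
    qed
    then show ?thesis by blast
  qed
  ultimately show ?thesis using that[OF uv(1) uv(5) uv(2) _ _ uv(7)] by blast
qed




lemma inv_not_mobile2:
  assumes "P S" "\<And>X Y. P X \<Longrightarrow> legal_move V E X Y \<Longrightarrow> P Y" "\<And>X. P X \<Longrightarrow> X \<subseteq> W"
    "\<exists>x\<in>V. x \<notin> W"
  shows "\<not> mobile_gp_set V E S"
proof -
  obtain x where x: "x \<in> V" "x \<notin> W" using assms(4) by blast
  show ?thesis by (rule inv_not_mobile[of P S V E W x, OF assms(1) assms(2) assms(3) x])
qed

lemma card_Union_pw:
  assumes "two S" "pw S"
  shows "card (\<Union> S) = 2 * card S"
proof -
  have "pairwise disjnt S" using assms(2) unfolding pw_def pairwise_def disjnt_def by blast
  moreover have "\<And>A. A \<in> S \<Longrightarrow> finite A" using assms(1) unfolding two_def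
    by (metis card.infinite zero_neq_numeral)
  ultimately have "card (\<Union> S) = sum card S" by (rule card_Union_disjoint)
  also have "\<dots> = sum (\<lambda>_. 2) S" using assms(1) unfolding two_def by (intro sum.cong) auto
  also have "\<dots> = 2 * card S" by simp
  finally show ?thesis .
qed

lemma pw_missing:
  assumes "3 \<le> n" "pw W" shows "\<exists>x\<in>kneser2_V n. x \<notin> W"
proof -
  have "{1,2} \<in> kneser2_V n" "{1,3} \<in> kneser2_V n" using assms(1) by (auto simp: kneser2_V_def)
  moreover have "{1,2} \<noteq> ({1,3}::nat set)" by (simp add: doubleton_eq_iff)
  moreover have "{1,2} \<inter> {1,3} \<noteq> ({}::nat set)" by simp
  moreover have "\<not> ({1,2} \<in> W \<and> {1,3} \<in> W)"
    using pw_D[OF assms(2), of "{1,2}" "{1,3}"] by (auto simp: doubleton_eq_iff)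
  ultimately show ?thesis by blast
qed

lemma star_missing:
  assumes "4 \<le> n" "\<forall>a\<in>W. x \<in> a" shows "\<exists>y\<in>kneser2_V n. y \<notin> W"
proof -
  have "{1,2} \<in> kneser2_V n" "{3,4} \<in> kneser2_V n" using assms(1) by (auto simp: kneser2_V_def)
  moreover have "\<not> ({1,2} \<in> W \<and> {3,4} \<in> W)"
  proof
    assume "{1,2} \<in> W \<and> {3,4} \<in> W"
    then have "x \<in> {1,2}" "x \<in> {3,4}" using assms(2) by auto
    then show False by auto
  qed
  ultimately show ?thesis by blast
qed

lemma in4_missing:
  assumes "5 \<le> n" "card T = 4" shows "\<exists>y\<in>kneser2_V n. \<not> y \<subseteq> T"
proof -
  have fT: "finite T" using assms(2) by (metis card.infinite zero_neq_numeral)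
  have "\<not> {1..n} \<subseteq> T"
  proof
    assume "{1..n} \<subseteq> T"
    then have "card {1..n} \<le> card T" by (rule card_mono[OF fT])
    then show False using assms by simp
  qed
  then obtain t where t: "t \<in> {1..n}" "t \<notin> T" by blast
  define s :: nat where "s = (if t = 1 then 2 else 1)"
  have "s \<noteq> t" "s \<in> {1..n}" using assms(1) t by (auto simp: s_def)
  then have "{s,t} \<in> kneser2_V n" using t by (auto simp: kneser2_V_def)
  then show ?thesis using t by blast
qed

lemma pw_bound:
  assumes n5: "5 \<le> n" and SV: "S \<subseteq> kneser2_V n" and p: "pw S" and c5: "5 \<le> card S"
    and mob: "mobile_gp_set (kneser2_V n) kneser2_E S"
  shows "2 * card S + 3 \<le> n"
proof (rule ccontr)
  assume "\<not> ?thesis"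
  then have le: "n \<le> 2 * card S + 2" by simp
  define k where "k = card S"
  define F where "F = {1..n} - \<Union> S"
  have US: "\<Union> S \<subseteq> {1..n}" using SV by (auto simp: kneser2_V_def)
  have cU: "card (\<Union> S) = 2 * k" using card_Union_pw[OF two_V[OF SV] p] by (simp add: k_def)
  have cF: "card F = n - 2 * k" unfolding F_def using card_Diff_subset[OF finite_subset[OF US] US] cU by simp
  have fS: "finite S" using SV by (rule fin_V)
  show False
  proof (cases "card F < 2")
    case True
    have inv: "Y = S" if X: "X = S" and lm: "legal_move (kneser2_V n) kneser2_E X Y" for X Y
    proof -
      have lm': "legal_move (kneser2_V n) kneser2_E S Y" using lm X by simp
      obtain u v where "u \<in> S" "Y = insert v (S - {u})" "v \<in> kneser2_V n" "v \<inter> \<Union> S = {}" "pw Y"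
        "Y \<subseteq> kneser2_V n" by (rule pw_move[OF n5 SV p c5 lm'])
      then have uv: "v \<in> kneser2_V n" "v \<inter> \<Union> S = {}" by auto
      then have "v \<subseteq> F" "card v = 2" using F_def by (auto simp: kneser2_V_def)
      then have "2 \<le> card F" using F_def by (metis card_mono finite_Diff finite_atLeastAtMost)
      then show "Y = S" using True by simp
    qed
    have "\<exists>x\<in>kneser2_V n. x \<notin> S" using pw_missing[of n S] n5 p by simp
    then have "\<not> mobile_gp_set (kneser2_V n) kneser2_E S"
      using inv_not_mobile2[where P = "\<lambda>X. X = S" and W = S and S = S] inv by blast
    then show False using mob by simp
  next
    case False
    then have F2: "card F = 2" using cF le k_def by linarith
    define M0 where "M0 = insert F S"
    have FS: "F \<notin> S"
    proof
      assume "F \<in> S"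
      then have "F \<subseteq> \<Union> S" by blast
      then have "F = {}" using F_def by blast
      then show False using F2 by simp
    qed
    have cM0: "card M0 = Suc k" using FS fS by (simp add: M0_def k_def)
    have UM0: "\<Union> M0 = {1..n}" using US by (auto simp: M0_def F_def)
    have pM0: "pw M0" using p unfolding pw_def M0_def F_def by blast
    have twoM0: "\<forall>m\<in>M0. card m = 2" using two_V[OF SV] F2 by (auto simp: M0_def two_def)
    let ?P = "\<lambda>X. X \<subseteq> kneser2_V n \<and> pw X \<and> card X = k \<and> X \<subseteq> M0"
    have P0: "?P S" using SV p by (auto simp: k_def M0_def)
    have inv: "?P Y" if PX: "?P X" and lm: "legal_move (kneser2_V n) kneser2_E X Y" for X Y
    proof -
      have fX: "finite X" using PX fin_V by blast
      have c5X: "5 \<le> card X" using PX c5 k_def by simp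
      have XV: "X \<subseteq> kneser2_V n" and pX: "pw X" using PX by auto
      obtain u v where uv: "u \<in> X" "Y = insert v (X - {u})" "v \<in> kneser2_V n" "v \<inter> \<Union> X = {}"
        "pw Y" "Y \<subseteq> kneser2_V n"
        by (rule pw_move[OF n5 XV pX c5X lm])
      have cY: "card Y = k" using legal_card[OF lm fX] PX by simp
      have "card (M0 - X) = 1" using PX cM0 by (simp add: card_Diff_subset finite_subset fX)
      then obtain m where m: "M0 - X = {m}" by (meson card_1_singletonE)
      have vm: "v \<subseteq> m"
      proof
        fix t assume t: "t \<in> v"
        then have "t \<in> \<Union> M0" using uv(3) UM0 by (auto simp: kneser2_V_def)
        then obtain b where b: "b \<in> M0" "t \<in> b" by blast
        have "b \<notin> X" using b t uv(4) by blast
        then show "t \<in> m" using b m by blast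
      qed
      have "m \<in> M0" using m by blast
      then have "card m = 2" using twoM0 by blast
      moreover have "card v = 2" using uv(3) by (simp add: kneser2_V_def)
      ultimately have "v = m" using vm by (metis card.infinite card_subset_eq zero_neq_numeral)
      then have "v \<in> M0" using m by blast
      then show "?P Y" using uv cY PX by auto
    qed
    have "\<exists>x\<in>kneser2_V n. x \<notin> M0" using pw_missing[of n M0] n5 pM0 by simp
    then have "\<not> mobile_gp_set (kneser2_V n) kneser2_E S"
      using inv_not_mobile2[where P = ?P and W = M0 and S = S] inv P0 by blast
    then show False using mob by simp
  qed
qed

lemma mobile_bound:
  assumes n5: "5 \<le> n" and mob: "mobile_gp_set (kneser2_V n) kneser2_E S"
  shows "card S \<le> 4 \<or> 2 * card S + 3 \<le> n"
proof (rule ccontr)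
  assume nt: "\<not> ?thesis"
  then have c5: "5 \<le> card S" by simp
  have gp: "gp_set (kneser2_V n) kneser2_E S" using mob by (simp add: mobile_gp_set_def)
  then have SV: "S \<subseteq> kneser2_V n" by (simp add: gp_set_def)
  have np: "nopat S" using gp_imp_nopat[OF n5 gp] .
  have c4: "4 \<le> card S" using c5 by simp
  have "pw S \<or> (\<exists>x. \<forall>a\<in>S. x \<in> a) \<or> (\<exists>T. card T = 4 \<and> (\<forall>a\<in>S. a \<subseteq> T))"
    by (rule classify[OF two_V[OF SV] np fin_V[OF SV] c4])
  then consider (p) "pw S" | (s) x where "\<forall>a\<in>S. x \<in> a" | (t) T where "card T = 4" "\<forall>a\<in>S. a \<subseteq> T"
    by blast
  then show False
  proof cases
    case p
    then have "2 * card S + 3 \<le> n" using pw_bound[OF n5 SV p c5 mob] by simp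
    then show False using nt by simp
  next
    case (s x)
    have inv: "Y = S" if X: "X = S" and lm: "legal_move (kneser2_V n) kneser2_E X Y" for X Y
      using star_stuck[OF n5 SV s c5] lm X by blast
    have "\<exists>x\<in>kneser2_V n. x \<notin> S" using star_missing[of n S x] n5 s by simp
    then have "\<not> mobile_gp_set (kneser2_V n) kneser2_E S"
      using inv_not_mobile2[where P = "\<lambda>X. X = S" and W = S and S = S] inv by blast
    then show False using mob by simp
  next
    case (t T)
    let ?P = "\<lambda>X. X \<subseteq> kneser2_V n \<and> card X = card S \<and> (\<forall>a\<in>X. a \<subseteq> T)"
    have P0: "?P S" using SV t by simp
    have inv: "?P Y" if PX: "?P X" and lm: "legal_move (kneser2_V n) kneser2_E X Y" for X Y
    proof -
      have fX: "finite X" using PX fin_V by blast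
      have c5X: "5 \<le> card X" using PX c5 by simp
      have "Y \<subseteq> kneser2_V n" using lm unfolding legal_move_def gp_set_def by blast
      moreover have "card Y = card S" using legal_card[OF lm fX] PX by simp
      moreover have "\<forall>a\<in>Y. a \<subseteq> T" using in4_inv[OF n5 _ _ t(1) c5X lm] PX by blast
      ultimately show "?P Y" by blast
    qed
    have "\<exists>x\<in>kneser2_V n. x \<notin> {a. a \<subseteq> T}" using in4_missing[OF n5 t(1)] by simp
    then have "\<not> mobile_gp_set (kneser2_V n) kneser2_E S"
      using inv_not_mobile2[where P = ?P and W = "{a. a \<subseteq> T}" and S = S] inv P0 by blast
    then show False using mob by simp
  qed
qed




definition pathp :: "('a \<Rightarrow> 'a \<Rightarrow> bool) \<Rightarrow> 'a list \<Rightarrow> 'a \<Rightarrow> 'a \<Rightarrow> bool" where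
  "pathp R cs A B \<longleftrightarrow> cs \<noteq> [] \<and> hd cs = A \<and> last cs = B \<and> successively R cs"

lemma pathp_concat:
  assumes "pathp R cs1 A B" "pathp R cs2 B C"
  shows "pathp R (cs1 @ tl cs2) A C \<and> set (cs1 @ tl cs2) = set cs1 \<union> set cs2"
proof -
  obtain ys where cs2: "cs2 = B # ys" using assms(2) unfolding pathp_def by (metis list.collapse)
  have s1: "successively R cs1" and s2: "successively R (B # ys)" using assms cs2 by (auto simp: pathp_def)
  have ne: "cs1 \<noteq> []" "last cs1 = B" "hd cs1 = A" using assms by (auto simp: pathp_def)
  have sy: "successively R ys" and h: "ys \<noteq> [] \<longrightarrow> R B (hd ys)" using s2 by (auto simp: successively_Cons)
  have "successively R (cs1 @ ys)" using s1 sy h ne by (auto simp: successively_append_iff)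
  moreover have "last (cs1 @ ys) = C"
  proof (cases "ys = []")
    case True then show ?thesis using assms(2) cs2 ne by (simp add: pathp_def)
  next
    case False then show ?thesis using assms(2) cs2 by (simp add: pathp_def)
  qed
  moreover have "set cs1 = insert B (set cs1)" using ne by (metis insert_absorb last_in_set)
  ultimately show ?thesis using ne cs2 by (auto simp: pathp_def)
qed

lemma pathp_rtranclp:
  assumes "R\<^sup>*\<^sup>* A B" shows "\<exists>cs. pathp R cs A B"
  using assms
proof (induction rule: rtranclp_induct)
  case base
  then show ?case by (rule exI[of _ "[A]"]) (simp add: pathp_def)
next
  case (step y z)
  then obtain cs where cs: "pathp R cs A y" by blast
  have "pathp R [y, z] y z" using step by (simp add: pathp_def)
  then show ?case using pathp_concat[OF cs] by blast
qed

lemma successively_nth: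
  "successively R cs \<Longrightarrow> Suc i < length cs \<Longrightarrow> R (cs ! i) (cs ! Suc i)"
proof (induction cs arbitrary: i)
  case Nil then show ?case by simp
next
  case (Cons x xs)
  then obtain y ys where xs: "xs = y # ys" by (cases xs) auto
  show ?case
  proof (cases i)
    case 0 then show ?thesis using Cons.prems xs by simp
  next
    case (Suc j)
    have "successively R xs" using Cons.prems(1) xs by simp
    moreover have "Suc j < length xs" using Cons.prems(2) Suc by simp
    ultimately have "R (xs ! j) (xs ! Suc j)" using Cons.IH by blast
    then show ?thesis using Suc by simp
  qed
qed

lemma legal_gp: "legal_move V E S T \<Longrightarrow> gp_set V E T"
  unfolding legal_move_def by blast

lemma legal_sym:
  assumes "legal_move (kneser2_V n) kneser2_E S T" "gp_set (kneser2_V n) kneser2_E S"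
  shows "legal_move (kneser2_V n) kneser2_E T S"
proof -
  obtain u v where uv: "u \<in> S" "v \<in> kneser2_V n" "v \<notin> S" "kneser2_E u v" "T = insert v (S - {u})"
    using assms(1) unfolding legal_move_def by blast
  have "u \<in> kneser2_V n" using assms(2) uv(1) by (auto simp: gp_set_def)
  moreover have "v \<in> T" "u \<notin> T" using uv by auto
  moreover have "kneser2_E v u" using uv(4) by (auto simp: kneser2_E_def)
  moreover have "S = insert u (T - {v})" using uv by auto
  ultimately show ?thesis using assms(2) unfolding legal_move_def by blast
qed

lemma reach_gp:
  assumes "(legal_move V E)\<^sup>*\<^sup>* S T" "gp_set V E S" shows "gp_set V E T"
  using assms by (induction rule: rtranclp_induct) (auto simp: legal_gp)

lemma reach_sym:
  assumes "(legal_move (kneser2_V n) kneser2_E)\<^sup>*\<^sup>* S T" "gp_set (kneser2_V n) kneser2_E S"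
  shows "(legal_move (kneser2_V n) kneser2_E)\<^sup>*\<^sup>* T S"
  using assms(1)
proof (induction rule: rtranclp_induct)
  case base then show ?case by simp
next
  case (step y z)
  have "gp_set (kneser2_V n) kneser2_E y" using reach_gp[OF step(1) assms(2)] .
  then have "legal_move (kneser2_V n) kneser2_E z y" using legal_sym step(2) by blast
  then show ?case using step(3) by (meson converse_rtranclp_into_rtranclp)
qed

lemma mobile_of_cover:
  assumes gp: "gp_set (kneser2_V n) kneser2_E S"
    and cov: "\<forall>x\<in>kneser2_V n. \<exists>T. (legal_move (kneser2_V n) kneser2_E)\<^sup>*\<^sup>* S T \<and> x \<in> T"
  shows "mobile_gp_set (kneser2_V n) kneser2_E S"
proof -
  let ?R = "legal_move (kneser2_V n) kneser2_E"
  have "\<And>X. finite X \<Longrightarrow> X \<subseteq> kneser2_V n \<Longrightarrow> \<exists>cs. pathp ?R cs S S \<and> X \<subseteq> \<Union> (set cs)"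
  proof -
    fix X :: "nat set set" assume "finite X" "X \<subseteq> kneser2_V n"
    then show "\<exists>cs. pathp ?R cs S S \<and> X \<subseteq> \<Union> (set cs)"
    proof (induction X rule: finite_induct)
      case empty
      have "pathp ?R [S] S S" by (simp add: pathp_def)
      then show ?case by blast
    next
      case (insert x X)
      then obtain cs where cs: "pathp ?R cs S S" "X \<subseteq> \<Union> (set cs)" by auto
      obtain T where T: "?R\<^sup>*\<^sup>* S T" "x \<in> T" using cov insert by auto
      obtain p where p: "pathp ?R p S T" using pathp_rtranclp[OF T(1)] by blast
      obtain q where q: "pathp ?R q T S" using pathp_rtranclp[OF reach_sym[OF T(1) gp]] by blast
      have T_in: "T \<in> set p" using p unfolding pathp_def by (metis last_in_set)
      from pathp_concat[OF p q] have pq: "pathp ?R (p @ tl q) S S" "set (p @ tl q) = set p \<union> set q" by auto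
      from pathp_concat[OF cs(1) pq(1)] have r: "pathp ?R (cs @ tl (p @ tl q)) S S"
        "set (cs @ tl (p @ tl q)) = set cs \<union> set (p @ tl q)" by auto
      have "insert x X \<subseteq> \<Union> (set (cs @ tl (p @ tl q)))" using r(2) pq(2) cs(2) T_in T(2) by auto
      then show ?case using r(1) by blast
    qed
  qed
  from this[OF KV_finite subset_refl] obtain cs where cs: "pathp ?R cs S S" "kneser2_V n \<subseteq> \<Union> (set cs)" by blast
  have c: "cs \<noteq> []" "hd cs = S" "successively ?R cs" using cs by (auto simp: pathp_def)
  have "\<forall>i. Suc i < length cs \<longrightarrow> ?R (cs ! i) (cs ! Suc i)" using successively_nth[OF c(3)] by blast
  then show ?thesis unfolding mobile_gp_set_def using gp c cs(2) by blast
qed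

lemma kmove2:
  assumes n5: "5 \<le> n" and "u \<notin> R" "v \<notin> R" "u \<inter> v = {}" "insert u R \<subseteq> kneser2_V n" "v \<in> kneser2_V n"
    "nopat (insert v R)"
  shows "legal_move (kneser2_V n) kneser2_E (insert u R) (insert v R)"
proof -
  have "u \<noteq> v" using assms(4,6) by (auto simp: kneser2_V_def)
  moreover have "insert v (insert u R - {u}) = insert v R" using assms(2) by auto
  moreover have "gp_set (kneser2_V n) kneser2_E (insert v R)"
    using nopat_imp_gp[OF n5 _ assms(7)] assms(5,6) by auto
  moreover have "v \<notin> insert u R" using assms(3) \<open>u \<noteq> v\<close> by simp
  moreover have "kneser2_E u v" using assms(4) by (simp add: kneser2_E_def)
  ultimately show ?thesis unfolding legal_move_def
    by (intro exI[of _ u] exI[of _ v]) (use assms(6) in simp)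
qed




definition stL :: "nat \<Rightarrow> nat set \<Rightarrow> nat set set" where
  "stL x L = (\<lambda>t. {x,t}) ` L"

lemma stL_insert: "stL x (insert d L) = insert {x,d} (stL x L)"
  by (simp add: stL_def)

lemma stL_V: "x \<in> {1..n} \<Longrightarrow> L \<subseteq> {1..n} \<Longrightarrow> x \<notin> L \<Longrightarrow> stL x L \<subseteq> kneser2_V n"
  unfolding stL_def kneser2_V_def
proof clarify
  fix t assume "x \<in> {1..n}" "L \<subseteq> {1..n}" "x \<notin> L" "t \<in> L"
  then show "{x, t} \<subseteq> {1..n} \<and> card {x, t} = 2" by (cases "x = t") auto
qed

lemma pairV: "p \<in> {1..n} \<Longrightarrow> q \<in> {1..n} \<Longrightarrow> p \<noteq> q \<Longrightarrow> {p,q} \<in> kneser2_V n"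
  by (auto simp: kneser2_V_def)

lemma nopat_stL: "nopat (stL x L)"
  by (rule nopat_star[of _ x]) (auto simp: stL_def)

lemma leaf_replace:
  assumes n5: "5 \<le> n" and x: "x \<in> {1..n}" and L3: "L3 \<subseteq> {1..n}" "card L3 = 3" "x \<notin> L3"
    and de: "d \<in> {1..n}" "e \<in> {1..n}" "d \<notin> insert x L3" "e \<notin> insert x L3"
  shows "(legal_move (kneser2_V n) kneser2_E)\<^sup>*\<^sup>* (stL x (insert d L3)) (stL x (insert e L3))"
proof -
  have c2: "2 \<le> card L3" using L3 by simp
  obtain b c where bc: "b \<in> L3" "c \<in> L3" "b \<noteq> c" by (rule two_elems[OF c2])
  have fL3: "finite L3" using L3(2) by (metis card.infinite zero_neq_numeral)
  let ?Q = "stL x L3"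
  have QV: "?Q \<subseteq> kneser2_V n" using stL_V[OF x L3(1,3)] .
  have xd: "{x,d} \<notin> ?Q" using de by (auto simp: stL_def doubleton_eq_iff)
  have xe: "{x,e} \<notin> ?Q" using de by (auto simp: stL_def doubleton_eq_iff)
  have bcQ: "{b,c} \<notin> ?Q" using bc L3(3) by (auto simp: stL_def doubleton_eq_iff)
  have bcV: "{b,c} \<in> kneser2_V n" using bc L3(1) by (intro pairV) auto
  have xdV: "{x,d} \<in> kneser2_V n" using x de by (intro pairV) auto
  have xeV: "{x,e} \<in> kneser2_V n" using x de by (intro pairV) auto
  have T4: "card (insert x L3) = 4" using L3 fL3 by simp
  have np1: "nopat (insert {b,c} ?Q)"
  proof (rule nopat_in4[OF _ _ T4])
    show "two (insert {b,c} ?Q)" using QV bcV two_V[of "insert {b,c} ?Q" n] by blast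
    show "\<forall>a\<in>insert {b, c} ?Q. a \<subseteq> insert x L3" using bc by (auto simp: stL_def)
  qed
  have m1: "legal_move (kneser2_V n) kneser2_E (insert {x,d} ?Q) (insert {b,c} ?Q)"
    by (rule kmove2[OF n5 xd bcQ _ _ bcV np1]) (use de bc QV xdV L3(3) in auto)
  have np2: "nopat (insert {x,e} ?Q)" using nopat_stL[of x "insert e L3"] by (simp add: stL_insert)
  have m2: "legal_move (kneser2_V n) kneser2_E (insert {b,c} ?Q) (insert {x,e} ?Q)"
    by (rule kmove2[OF n5 bcQ xe _ _ xeV np2]) (use de bc QV bcV L3(3) in auto)
  show ?thesis unfolding stL_insert using m1 m2 by auto
qed


lemma nopat_in4V: "F \<subseteq> kneser2_V n \<Longrightarrow> \<forall>f\<in>F. f \<subseteq> T \<Longrightarrow> card T = 4 \<Longrightarrow> nopat F"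
  using nopat_in4 two_V by blast

lemma center_swap_explicit:
  assumes n5: "5 \<le> n" and mem: "x \<in> {1..n}" "a \<in> {1..n}" "b \<in> {1..n}" "c \<in> {1..n}" "d \<in> {1..n}"
    and dist: "x \<noteq> a" "x \<noteq> b" "x \<noteq> c" "x \<noteq> d" "a \<noteq> b" "a \<noteq> c" "a \<noteq> d" "b \<noteq> c" "b \<noteq> d" "c \<noteq> d"
  shows "(legal_move (kneser2_V n) kneser2_E)\<^sup>*\<^sup>* {{x,a},{x,b},{x,c},{x,d}} {{a,x},{a,b},{a,c},{a,d}}"
proof -
  let ?R = "legal_move (kneser2_V n) kneser2_E"
  have V: "{p,q} \<in> kneser2_V n" if "p \<in> {x,a,b,c,d}" "q \<in> {x,a,b,c,d}" "p \<noteq> q" for p q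
    using that mem by (intro pairV) auto
  have dist': "a \<noteq> x" "b \<noteq> x" "c \<noteq> x" "d \<noteq> x" "b \<noteq> a" "c \<noteq> a" "d \<noteq> a" "c \<noteq> b" "d \<noteq> b" "d \<noteq> c"
    using dist by auto
  note D = dist dist'
  have T4: "card {x,a,b,c} = 4" using D by simp
  define Q1 where "Q1 = {{x,a},{x,b},{x,c}}"
  define Q2 where "Q2 = {{x,a},{x,c},{b,c}}"
  define Q3 where "Q3 = {{x,a},{a,c},{b,c}}"
  define Q4 where "Q4 = {{x,a},{a,c},{a,b}}"
  have m1: "?R (insert {x,d} Q1) (insert {b,c} Q1)"
  proof (rule kmove2[OF n5])
    show "{x,d} \<notin> Q1" "{b,c} \<notin> Q1" "{x,d} \<inter> {b,c} = {}" using D by (auto simp: Q1_def doubleton_eq_iff)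
    show "insert {x,d} Q1 \<subseteq> kneser2_V n" "{b,c} \<in> kneser2_V n" using V D by (auto simp: Q1_def)
    show "nopat (insert {b,c} Q1)" by (rule nopat_in4V[OF _ _ T4]) (use V D in \<open>auto simp: Q1_def\<close>)
  qed
  have e1: "insert {b,c} Q1 = insert {x,b} Q2" by (auto simp: Q1_def Q2_def)
  have m2: "?R (insert {x,b} Q2) (insert {a,c} Q2)"
  proof (rule kmove2[OF n5])
    show "{x,b} \<notin> Q2" "{a,c} \<notin> Q2" "{x,b} \<inter> {a,c} = {}" using D by (auto simp: Q2_def doubleton_eq_iff)
    show "insert {x,b} Q2 \<subseteq> kneser2_V n" "{a,c} \<in> kneser2_V n" using V D by (auto simp: Q2_def)
    show "nopat (insert {a,c} Q2)" by (rule nopat_in4V[OF _ _ T4]) (use V D in \<open>auto simp: Q2_def\<close>)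
  qed
  have e2: "insert {a,c} Q2 = insert {x,c} Q3" by (auto simp: Q2_def Q3_def)
  have m3: "?R (insert {x,c} Q3) (insert {a,b} Q3)"
  proof (rule kmove2[OF n5])
    show "{x,c} \<notin> Q3" "{a,b} \<notin> Q3" "{x,c} \<inter> {a,b} = {}" using D by (auto simp: Q3_def doubleton_eq_iff)
    show "insert {x,c} Q3 \<subseteq> kneser2_V n" "{a,b} \<in> kneser2_V n" using V D by (auto simp: Q3_def)
    show "nopat (insert {a,b} Q3)" by (rule nopat_in4V[OF _ _ T4]) (use V D in \<open>auto simp: Q3_def\<close>)
  qed
  have e3: "insert {a,b} Q3 = insert {b,c} Q4" by (auto simp: Q3_def Q4_def)
  have m4: "?R (insert {b,c} Q4) (insert {a,d} Q4)"
  proof (rule kmove2[OF n5])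
    show "{b,c} \<notin> Q4" "{a,d} \<notin> Q4" "{b,c} \<inter> {a,d} = {}" using D by (auto simp: Q4_def doubleton_eq_iff)
    show "insert {b,c} Q4 \<subseteq> kneser2_V n" "{a,d} \<in> kneser2_V n" using V D by (auto simp: Q4_def)
    show "nopat (insert {a,d} Q4)" by (rule nopat_star[of _ a]) (auto simp: Q4_def)
  qed
  have s0: "{{x,a},{x,b},{x,c},{x,d}} = insert {x,d} Q1" by (auto simp: Q1_def)
  have s4: "{{a,x},{a,b},{a,c},{a,d}} = insert {a,d} Q4" by (auto simp: Q4_def)
  have "?R\<^sup>*\<^sup>* (insert {x,d} Q1) (insert {a,d} Q4)"
    using m1 m2 m3 m4 e1 e2 e3 by (metis (no_types, lifting) rtranclp.rtrancl_into_rtrancl rtranclp.rtrancl_refl)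
  then show ?thesis using s0 s4 by simp
qed


lemma center_swap:
  assumes n5: "5 \<le> n" and x: "x \<in> {1..n}" and L: "L \<subseteq> {1..n}" "card L = 4" "x \<notin> L" and a: "a \<in> L"
  shows "(legal_move (kneser2_V n) kneser2_E)\<^sup>*\<^sup>* (stL x L) (stL a (insert x (L - {a})))"
proof -
  have "card (L - {a}) = 3" using L a by simp
  then obtain b c d where bcd: "L - {a} = {b,c,d}" "b \<noteq> c" "b \<noteq> d" "c \<noteq> d" by (meson card_3_iff)
  have La: "L = insert a {b,c,d}" using bcd(1) a by blast
  have mem: "a \<in> {1..n}" "b \<in> {1..n}" "c \<in> {1..n}" "d \<in> {1..n}" using L La by auto
  have dist: "x \<noteq> a" "x \<noteq> b" "x \<noteq> c" "x \<noteq> d" "a \<noteq> b" "a \<noteq> c" "a \<noteq> d"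
    using L(3) La bcd(1) by auto
  have "(legal_move (kneser2_V n) kneser2_E)\<^sup>*\<^sup>* {{x,a},{x,b},{x,c},{x,d}} {{a,x},{a,b},{a,c},{a,d}}"
    by (rule center_swap_explicit[OF n5 x mem dist bcd(2,3,4)])
  moreover have "stL x L = {{x,a},{x,b},{x,c},{x,d}}" using La by (simp add: stL_def)
  moreover have "stL a (insert x (L - {a})) = {{a,x},{a,b},{a,c},{a,d}}" using bcd(1) by (simp add: stL_def)
  ultimately show ?thesis by simp
qed

lemma star_leaves:
  assumes n5: "5 \<le> n" and x: "x \<in> {1..n}"
    and L': "L' \<subseteq> {1..n}" "card L' = 4" "x \<notin> L'"
  shows "L \<subseteq> {1..n} \<Longrightarrow> card L = 4 \<Longrightarrow> x \<notin> L \<Longrightarrow>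
    (legal_move (kneser2_V n) kneser2_E)\<^sup>*\<^sup>* (stL x L) (stL x L')"
proof (induction "card (L' - L)" arbitrary: L)
  case 0
  have fL': "finite L'" using L'(2) by (metis card.infinite zero_neq_numeral)
  then have "L' \<subseteq> L" using 0 by simp
  moreover have "finite L" using 0(3) by (metis card.infinite zero_neq_numeral)
  ultimately have "L' = L" using 0 L' by (metis card_subset_eq)
  then show ?case by simp
next
  case (Suc m)
  have fL': "finite L'" using L'(2) by (metis card.infinite zero_neq_numeral)
  have fL: "finite L" using Suc(4) by (metis card.infinite zero_neq_numeral)
  obtain e where e: "e \<in> L'" "e \<notin> L" using Suc(2) by (metis Diff_eq_empty_iff card_0_eq finite_Diff fL' nat.simps(3) subsetI)
  have "\<not> L \<subseteq> L'"
  proof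
    assume "L \<subseteq> L'"
    then have "L = L'" using fL' Suc(4) L'(2) by (metis card_subset_eq)
    then show False using e by simp
  qed
  then obtain d where d: "d \<in> L" "d \<notin> L'" by blast
  define L3 where "L3 = L - {d}"
  have L3: "L3 \<subseteq> {1..n}" "card L3 = 3" "x \<notin> L3" using Suc(3,4,5) d fL by (auto simp: L3_def)
  have dm: "d \<in> {1..n}" "e \<in> {1..n}" "d \<notin> insert x L3" "e \<notin> insert x L3"
    using Suc(3,5) d e L' by (auto simp: L3_def)
  have step: "(legal_move (kneser2_V n) kneser2_E)\<^sup>*\<^sup>* (stL x (insert d L3)) (stL x (insert e L3))"
    by (rule leaf_replace[OF n5 x L3 dm])
  have Ld: "insert d L3 = L" using d by (auto simp: L3_def)
  define L1 where "L1 = insert e L3"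
  have L1: "L1 \<subseteq> {1..n}" "card L1 = 4" "x \<notin> L1"
    using L3 dm fL by (auto simp: L1_def L3_def)
  have "L' - L1 = (L' - L) - {e}" using d by (auto simp: L1_def L3_def)
  then have "card (L' - L1) = m" using Suc(2) e fL' by simp
  then have "(legal_move (kneser2_V n) kneser2_E)\<^sup>*\<^sup>* (stL x L1) (stL x L')"
    using Suc(1) L1 by blast
  then show ?case using step Ld by (simp add: L1_def)
qed


lemma sub_card:
  assumes "A \<subseteq> {1..n}" "card A \<le> m" "m + k \<le> n" "finite A"
  obtains B where "B \<subseteq> {1..n} - A" "card B = k"
proof -
  have "card ({1..n} - A) = n - card A" using assms(1,4) by (simp add: card_Diff_subset)
  then have "k \<le> card ({1..n} - A)" using assms(2,3) by simp
  then show ?thesis using that by (meson obtain_subset_with_card_n)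
qed

lemma star_cover:
  assumes n5: "5 \<le> n" and pq: "p \<in> {1..n}" "q \<in> {1..n}" "p \<noteq> q"
  shows "\<exists>T. (legal_move (kneser2_V n) kneser2_E)\<^sup>*\<^sup>* (stL 1 {2,3,4,5}) T \<and> {p,q} \<in> T"
proof -
  let ?R = "legal_move (kneser2_V n) kneser2_E"
  have one: "(1::nat) \<in> {1..n}" using n5 by simp
  have L0: "{2,3,4,5} \<subseteq> {1..n}" "card {2,3,4,5::nat} = 4" "(1::nat) \<notin> {2,3,4,5}" using n5 by auto
  have reach: "?R\<^sup>*\<^sup>* (stL 1 {2,3,4,5}) (stL 1 L)" if "L \<subseteq> {1..n}" "card L = 4" "1 \<notin> L" for L
    by (rule star_leaves[OF n5 one that L0])
  have gen: "\<exists>T. ?R\<^sup>*\<^sup>* (stL 1 {2,3,4,5}) T \<and> {1,r} \<in> T" if r: "r \<in> {1..n}" "r \<noteq> 1" for r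
  proof -
    obtain B where B: "B \<subseteq> {1..n} - {1,r}" "card B = 3"
      using sub_card[of "{1,r}" n 2 3] r n5 by auto
    have fB: "finite B" using B(2) by (metis card.infinite zero_neq_numeral)
    let ?L = "insert r B"
    have rB: "r \<notin> B" using B by auto
    have L: "?L \<subseteq> {1..n}" "card ?L = 4" "1 \<notin> ?L" using B r fB rB by auto
    have "{1,r} \<in> stL 1 ?L" by (simp add: stL_def)
    then show ?thesis using reach[OF L] by blast
  qed
  show ?thesis
  proof (cases "p = 1 \<or> q = 1")
    case True
    then show ?thesis
    proof
      assume "p = 1" then show ?thesis using gen[of q] pq by auto
    next
      assume "q = 1" then show ?thesis using gen[of p] pq by (auto simp: insert_commute)
    qed
  next
    case False
    have s3: "{1,p,q} \<subseteq> {1..n}" using pq one by auto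
    have c3: "card {1,p,q} \<le> 3" by (auto simp: card_insert_if)
    obtain B where B: "B \<subseteq> {1..n} - {1,p,q}" "card B = 2"
      using sub_card[OF s3 c3, of 2] n5 by auto
    have fB: "finite B" using B(2) by (metis card.infinite zero_neq_numeral)
    have nB: "p \<notin> B" "q \<notin> B" "1 \<notin> B" using B by auto
    let ?L = "insert p (insert q B)"
    have cL: "card ?L = 4" using fB nB B(2) pq(3) by simp
    have L: "?L \<subseteq> {1..n}" "card ?L = 4" "1 \<notin> ?L" using B pq cL False nB by auto
    have r1: "?R\<^sup>*\<^sup>* (stL 1 {2,3,4,5}) (stL 1 ?L)" by (rule reach[OF L])
    have r2: "?R\<^sup>*\<^sup>* (stL 1 ?L) (stL p (insert 1 (?L - {p})))"
      by (rule center_swap[OF n5 one L]) simp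
    have "{p,q} \<in> stL p (insert 1 (?L - {p}))" using pq by (auto simp: stL_def)
    then show ?thesis using r1 r2 by (meson rtranclp_trans)
  qed
qed

lemma star_mobile:
  assumes n5: "5 \<le> n"
  shows "mobile_gp_set (kneser2_V n) kneser2_E (stL 1 {2,3,4,5}) \<and> card (stL 1 {2,3,4,5}) = 4"
proof
  have one: "(1::nat) \<in> {1..n}" using n5 by simp
  have L0: "{2,3,4,5} \<subseteq> {1..n}" "(1::nat) \<notin> {2,3,4,5}" using n5 by auto
  have gp: "gp_set (kneser2_V n) kneser2_E (stL 1 {2,3,4,5})"
    by (rule nopat_imp_gp[OF n5 stL_V[OF one L0] nopat_stL])
  show "mobile_gp_set (kneser2_V n) kneser2_E (stL 1 {2,3,4,5})"
  proof (rule mobile_of_cover[OF gp], rule ballI)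
    fix y assume "y \<in> kneser2_V n"
    then have "card y = 2" "y \<subseteq> {1..n}" by (auto simp: kneser2_V_def)
    then obtain p q where "p \<noteq> q" "y = {p,q}" "p \<in> {1..n}" "q \<in> {1..n}"
      by (metis card2E insert_subset)
    then show "\<exists>T. (legal_move (kneser2_V n) kneser2_E)\<^sup>*\<^sup>* (stL 1 {2,3,4,5}) T \<and> y \<in> T"
      using star_cover[OF n5] by blast
  qed
  show "card (stL 1 {2,3,4,5}) = 4" by (simp add: stL_def doubleton_eq_iff)
qed




definition free :: "nat \<Rightarrow> nat set set \<Rightarrow> nat set" where
  "free n X = {1..n} - \<Union> X"

lemma cmove:
  assumes n5: "5 \<le> n" and XV: "X \<subseteq> kneser2_V n" and pX: "pw X" and u: "u \<in> X"
    and v: "v \<subseteq> free n X" "card v = 2"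
  shows "legal_move (kneser2_V n) kneser2_E X (insert v (X - {u}))
    \<and> insert v (X - {u}) \<subseteq> kneser2_V n \<and> pw (insert v (X - {u})) \<and> card (insert v (X - {u})) = card X"
proof -
  have vV: "v \<in> kneser2_V n" using v by (auto simp: kneser2_V_def free_def)
  have vne: "v \<noteq> {}" using v(2) by auto
  have vdis: "\<forall>w\<in>X. w \<inter> v = {}" using v(1) by (auto simp: free_def)
  have vX: "v \<notin> X" using vdis vne by blast
  have uv: "u \<inter> v = {}" using vdis u by blast
  have Y: "insert v (X - {u}) \<subseteq> kneser2_V n" using XV vV by auto
  have pY: "pw (insert v (X - {u}))"
    unfolding pw_def
  proof (intro ballI impI)
    fix a b assume a: "a \<in> insert v (X - {u})" and b: "b \<in> insert v (X - {u})" and ab: "a \<noteq> b"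
    show "a \<inter> b = {}"
    proof (cases "a = v")
      case True then show ?thesis using b ab vdis by auto
    next
      case False
      then have aX: "a \<in> X" using a by auto
      show ?thesis
      proof (cases "b = v")
        case True then show ?thesis using aX vdis by auto
      next
        case False then have "b \<in> X" using b by auto
        then show ?thesis using pw_D[OF pX aX _ ab] by simp
      qed
    qed
  qed
  have gp: "gp_set (kneser2_V n) kneser2_E (insert v (X - {u}))"
    by (rule nopat_imp_gp[OF n5 Y nopat_pw[OF pY]])
  have lm: "legal_move (kneser2_V n) kneser2_E X (insert v (X - {u}))"
    unfolding legal_move_def
    by (intro exI[of _ u] exI[of _ v]) (use u vV vX uv gp in \<open>simp add: kneser2_E_def\<close>)
  have fX: "finite X" using XV by (rule fin_V)
  have "card (insert v (X - {u})) = card X" using legal_card[OF lm fX] .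
  then show ?thesis using lm Y pY by blast
qed

lemma card_free:
  assumes "X \<subseteq> kneser2_V n" "pw X" shows "card (free n X) = n - 2 * card X"
proof -
  have US: "\<Union> X \<subseteq> {1..n}" using assms(1) by (auto simp: kneser2_V_def)
  have "card (\<Union> X) = 2 * card X" using card_Union_pw[OF two_V[OF assms(1)] assms(2)] .
  then show ?thesis unfolding free_def using card_Diff_subset[OF finite_subset[OF US] US] by simp
qed

lemma free_one:
  assumes n5: "5 \<le> n" and XV: "X \<subseteq> kneser2_V n" and pX: "pw X" and ck: "2 * card X + 3 \<le> n"
    and p: "p \<in> {1..n}"
  shows "\<exists>Y. (legal_move (kneser2_V n) kneser2_E)\<^sup>*\<^sup>* X Y \<and> Y \<subseteq> kneser2_V n \<and> pw Y \<and> card Y = card X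
     \<and> p \<in> free n Y \<and> (q \<in> free n X \<longrightarrow> q \<in> free n Y)"
proof (cases "p \<in> free n X")
  case True then show ?thesis using XV pX by blast
next
  case False
  then obtain u where u: "u \<in> X" "p \<in> u" using p by (auto simp: free_def)
  have "card (free n X) \<ge> 3" using card_free[OF XV pX] ck by simp
  then have "card (free n X - {q}) \<ge> 2"
    by (metis Diff_empty Diff_insert0 card_Diff_singleton card.infinite diff_le_mono le_trans
        not_numeral_le_zero numeral_le_iff semiring_norm(69) diff_Suc_1 numeral_3_eq_3 numeral_2_eq_2 le_antisym nat_le_linear)
  then obtain v where v: "v \<subseteq> free n X - {q}" "card v = 2" by (meson obtain_subset_with_card_n)
  have vf: "v \<subseteq> free n X" using v by blast
  note cm = cmove[OF n5 XV pX u(1) vf v(2)]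
  let ?Y = "insert v (X - {u})"
  have pv: "p \<notin> v" using vf False by blast
  have "p \<in> free n ?Y"
  proof -
    have "p \<notin> w" if "w \<in> X - {u}" for w using pw_D[OF pX u(1), of w] that u(2) by auto
    then show ?thesis using p pv by (auto simp: free_def)
  qed
  moreover have "q \<in> free n X \<longrightarrow> q \<in> free n ?Y" using v by (auto simp: free_def)
  ultimately show ?thesis using cm by blast
qed


lemma clique_cover:
  assumes n5: "5 \<le> n" and XV: "X \<subseteq> kneser2_V n" and pX: "pw X" and ck: "2 * card X + 3 \<le> n"
    and k1: "1 \<le> card X" and pq: "p \<in> {1..n}" "q \<in> {1..n}" "p \<noteq> q"
  shows "\<exists>Y. (legal_move (kneser2_V n) kneser2_E)\<^sup>*\<^sup>* X Y \<and> {p,q} \<in> Y"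
proof -
  obtain X1 where X1: "(legal_move (kneser2_V n) kneser2_E)\<^sup>*\<^sup>* X X1" "X1 \<subseteq> kneser2_V n" "pw X1"
    "card X1 = card X" "q \<in> free n X1"
    using free_one[OF n5 XV pX ck pq(2), of q] by blast
  have ck1: "2 * card X1 + 3 \<le> n" using ck X1(4) by simp
  obtain X2 where X2: "(legal_move (kneser2_V n) kneser2_E)\<^sup>*\<^sup>* X1 X2" "X2 \<subseteq> kneser2_V n" "pw X2"
    "card X2 = card X" "p \<in> free n X2" "q \<in> free n X2"
    using free_one[OF n5 X1(2,3) ck1 pq(1), of q] X1(4,5) by auto
  have "X2 \<noteq> {}" using X2(4) k1 by auto
  then obtain u where u: "u \<in> X2" by blast
  have v: "{p,q} \<subseteq> free n X2" "card {p,q} = 2" using X2(5,6) pq(3) by auto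
  note cm = cmove[OF n5 X2(2,3) u v]
  have "(legal_move (kneser2_V n) kneser2_E)\<^sup>*\<^sup>* X (insert {p,q} (X2 - {u}))"
    using X1(1) X2(1) cm by (meson rtranclp.rtrancl_into_rtrancl rtranclp_trans)
  then show ?thesis by blast
qed

definition clq :: "nat \<Rightarrow> nat set set" where
  "clq k = (\<lambda>i. {2*i+1, 2*i+2}) ` {..<k}"

lemma clq_props:
  assumes "2 * k \<le> n"
  shows "clq k \<subseteq> kneser2_V n" "pw (clq k)" "card (clq k) = k"
proof -
  show "clq k \<subseteq> kneser2_V n" using assms by (auto simp: clq_def kneser2_V_def)
  show "pw (clq k)" unfolding pw_def clq_def by (auto; presburger)
  have "inj_on (\<lambda>i. {2*i+1, 2*i+2::nat}) {..<k}"
  proof (rule inj_onI)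
    fix i j assume "{2*i+1, 2*i+2::nat} = {2*j+1, 2*j+2}"
    then have "2*i+1 \<in> {2*j+1, 2*j+2::nat}" by blast
    then show "i = j" by auto
  qed
  then show "card (clq k) = k" by (simp add: clq_def card_image)
qed

lemma clique_mobile:
  assumes n5: "5 \<le> n" and k1: "1 \<le> k" and ck: "2 * k + 3 \<le> n"
  shows "mobile_gp_set (kneser2_V n) kneser2_E (clq k) \<and> card (clq k) = k"
proof -
  have "2 * k \<le> n" using ck by simp
  note cp = clq_props[OF this]
  have gp: "gp_set (kneser2_V n) kneser2_E (clq k)" by (rule nopat_imp_gp[OF n5 cp(1) nopat_pw[OF cp(2)]])
  have "mobile_gp_set (kneser2_V n) kneser2_E (clq k)"
  proof (rule mobile_of_cover[OF gp], rule ballI)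
    fix y assume "y \<in> kneser2_V n"
    then have "card y = 2" "y \<subseteq> {1..n}" by (auto simp: kneser2_V_def)
    then obtain p q where "p \<noteq> q" "y = {p,q}" "p \<in> {1..n}" "q \<in> {1..n}"
      by (metis card2E insert_subset)
    then show "\<exists>T. (legal_move (kneser2_V n) kneser2_E)\<^sup>*\<^sup>* (clq k) T \<and> y \<in> T"
      using clique_cover[OF n5 cp(1,2)] cp(3) ck k1 by auto
  qed
  then show ?thesis using cp(3) by simp
qed

theorem theorem3p1:
  fixes n :: nat
  assumes "n \<ge> 5"
  shows "mob (kneser2_V n) kneser2_E = max 4 ((n - 3) div 2)"
proof -
  have n5: "5 \<le> n" using assms by simp
  let ?A = "{card S | S. mobile_gp_set (kneser2_V n) kneser2_E S}"
  have fin: "finite ?A"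
  proof (rule finite_subset[of _ "{0..card (kneser2_V n)}"])
    show "?A \<subseteq> {0..card (kneser2_V n)}"
    proof
      fix c assume "c \<in> ?A"
      then obtain S where S: "c = card S" "mobile_gp_set (kneser2_V n) kneser2_E S" by blast
      then have "S \<subseteq> kneser2_V n" by (simp add: mobile_gp_set_def gp_set_def)
      then have "card S \<le> card (kneser2_V n)" by (rule card_mono[OF KV_finite])
      then show "c \<in> {0..card (kneser2_V n)}" using S by simp
    qed
  qed simp
  have ub: "\<forall>c\<in>?A. c \<le> max 4 ((n - 3) div 2)"
  proof
    fix c assume "c \<in> ?A"
    then obtain S where S: "c = card S" "mobile_gp_set (kneser2_V n) kneser2_E S" by blast
    have "card S \<le> 4 \<or> 2 * card S + 3 \<le> n" by (rule mobile_bound[OF n5 S(2)])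
    then show "c \<le> max 4 ((n - 3) div 2)" using S(1) by auto
  qed
  have mem: "max 4 ((n - 3) div 2) \<in> ?A"
  proof (cases "(n - 3) div 2 \<le> 4")
    case True
    then have "max 4 ((n - 3) div 2) = card (stL 1 {2,3,4,5})" using star_mobile[OF n5] by simp
    then show ?thesis using star_mobile[OF n5] by blast
  next
    case False
    let ?k = "(n - 3) div 2"
    have "1 \<le> ?k" "2 * ?k + 3 \<le> n" using False by auto
    note cm = clique_mobile[OF n5 this]
    have "max 4 ?k = card (clq ?k)" using cm False by simp
    then show ?thesis using cm by blast
  qed
  show ?thesis unfolding mob_def by (rule Max_eqI[OF fin]) (use ub mem in auto)
qed



end
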